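(* Let $F(d)=1/d^2$ and let $(x_n)_{n\in\mathbb Z}$ be a uniformly discrete equilibrium configuration for $F$ having a periodic tail, i.e. there exist $N\in\mathbb Z$, an integer $k\ge1$ and a real $t>0$ such that $x_{n+k}=x_n+t$ for all $n\ge N$ (or for all $n\le N$). Then the configuration is trivial, i.e. $x_{n+1}-x_n$ is constant.
   Context: A configuration is a strictly increasing bi-infinite sequence $(x_n)_{n\in\mathbb Z}$ of reals; it is uniformly discrete if there are constants $0<c\le C<\infty$ with $c\le x_n-x_{n-1}\le C$ for all $n$. The particle at $x_n$ is in equilibrium if $\sum_{m<n}F(x_n-x_m)$ and $\sum_{m>n}F(x_m-x_n)$ are both finite and equal; an equilibrium configuration is one in which every particle is in equilibrium. It is trivial if it is an arithmetic progression. *)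

theory Defs
  imports "HOL-Analysis.Analysis"
begin

definition configuration :: "(int \<Rightarrow> real) \<Rightarrow> bool" where
  "configuration x \<longleftrightarrow> strict_mono x"

definition uniformly_discrete :: "(int \<Rightarrow> real) \<Rightarrow> bool" where
  "uniformly_discrete x \<longleftrightarrow>
     (\<exists>c C. 0 < c \<and> c \<le> C \<and> (\<forall>n. c \<le> x n - x (n - 1) \<and> x n - x (n - 1) \<le> C))"

definition in_equilibrium :: "(real \<Rightarrow> real) \<Rightarrow> (int \<Rightarrow> real) \<Rightarrow> int \<Rightarrow> bool" where
  "in_equilibrium F x n \<longleftrightarrow>
     (\<lambda>m. F (x n - x m)) summable_on {m. m < n} \<and>
     (\<lambda>m. F (x m - x n)) summable_on {m. m > n} \<and>
     (\<Sum>\<^sub>\<infinity>m\<in>{m. m < n}. F (x n - x m)) = (\<Sum>\<^sub>\<infinity>m\<in>{m. m > n}. F (x m - x n))"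

definition equilibrium_configuration :: "(real \<Rightarrow> real) \<Rightarrow> (int \<Rightarrow> real) \<Rightarrow> bool" where
  "equilibrium_configuration F x \<longleftrightarrow> configuration x \<and> (\<forall>n. in_equilibrium F x n)"

definition trivial_configuration :: "(int \<Rightarrow> real) \<Rightarrow> bool" where
  "trivial_configuration x \<longleftrightarrow> (\<exists>d. \<forall>n. x (n + 1) - x n = d)"

end

theory Submission
  imports Defs
begin


lemma pointwise_ineq:
  fixes a b u v C0 :: real
  assumes "\<bar>a\<bar> \<le> C0" "\<bar>b\<bar> \<le> C0"
  shows "(b - a) * (v^2 * b - u^2 * a) \<ge> ((u^2 + v^2)/2) * (b - a)^2 / 2 - 2 * C0^2 * (v - u)^2"
proof -
  have dec: "v^2 * b - u^2 * a = ((u^2+v^2)/2) * (b - a) + ((a+b)/2) * ((v+u)*(v-u))"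
    by (simp add: field_simps power2_eq_square)
  have ab: "\<bar>(a+b)/2\<bar> \<le> C0" using assms by simp
  define p where "p = \<bar>v+u\<bar> * \<bar>b-a\<bar>"
  define q where "q = C0 * \<bar>v-u\<bar>"
  have "\<bar>((a+b)/2) * ((v+u)*(v-u)) * (b-a)\<bar> = \<bar>(a+b)/2\<bar> * (p * \<bar>v-u\<bar>)"
    by (simp add: p_def abs_mult)
  also have "... \<le> C0 * (p * \<bar>v-u\<bar>)" by (rule mult_right_mono[OF ab]) (simp add: p_def)
  also have "... = p * q" by (simp add: q_def)
  also have "p*q \<le> p^2/8 + 2*q^2"
  proof -
    have "0 \<le> (p-4*q)^2" by simp
    then show ?thesis by (simp add: power2_eq_square algebra_simps)
  qed
  also have "p^2 \<le> 2*(u^2+v^2)*(b-a)^2"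
  proof -
    have "0 \<le> (u-v)^2" by simp
    then have "(v+u)^2 \<le> 2*(u^2+v^2)" by (simp add: power2_eq_square algebra_simps)
    then have "(v+u)^2 * (b-a)^2 \<le> 2*(u^2+v^2)*(b-a)^2" by (rule mult_right_mono) simp
    then show ?thesis unfolding p_def by (simp add: power_mult_distrib)
  qed
  finally have "\<bar>((a+b)/2) * ((v+u)*(v-u)) * (b-a)\<bar> \<le> 2*(u^2+v^2)*(b-a)^2/8 + 2*q^2" by linarith
  moreover have "q^2 = C0^2*(v-u)^2" unfolding q_def by (simp add: power_mult_distrib)
  ultimately have Y: "\<bar>((a+b)/2) * ((v+u)*(v-u)) * (b-a)\<bar> \<le> ((u^2+v^2)/2) * (b-a)^2 / 2 + 2 * C0^2 * (v - u)^2"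
    by (simp add: field_simps)
  have "(b - a) * (v^2 * b - u^2 * a) = ((u^2+v^2)/2) * (b-a)^2 + ((a+b)/2) * ((v+u)*(v-u)) * (b-a)"
  proof -
    have gen: "\<And>h k W d::real. d*(h*d + k*W) = h*d^2 + k*W*d" by (simp add: power2_eq_square algebra_simps)
    show ?thesis unfolding dec by (rule gen)
  qed
  then show ?thesis using Y by linarith
qed



lemma caccioppoli:
  fixes w :: "int \<Rightarrow> int \<Rightarrow> real" and g \<eta> :: "int \<Rightarrow> real" and P :: "int set"
  assumes fin: "finite P" and wsym: "\<And>n m. w n m = w m n" and wpos: "\<And>n m. 0 \<le> w n m"
    and gb: "\<And>n. \<bar>g n\<bar> \<le> C0"
  shows "(\<Sum>n\<in>P. \<Sum>m\<in>P. w n m * ((\<eta> n^2 + \<eta> m^2)/2) * (g m - g n)^2)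
    \<le> -4 * (\<Sum>n\<in>P. \<eta> n^2 * g n * (\<Sum>m\<in>P. w n m * (g m - g n)))
       + 4*C0^2*(\<Sum>n\<in>P. \<Sum>m\<in>P. w n m * (\<eta> m - \<eta> n)^2)"
proof -
  define \<phi> where "\<phi> n = \<eta> n^2 * g n" for n
  define S where "S = (\<Sum>n\<in>P. \<Sum>m\<in>P. w n m * (g m - g n) * (\<phi> m - \<phi> n))"
  define A where "A = (\<Sum>n\<in>P. \<Sum>m\<in>P. w n m * (g m - g n) * \<phi> n)"
  have S1: "S = (\<Sum>n\<in>P. \<Sum>m\<in>P. w n m * (g m - g n) * \<phi> m) - A"
    by (simp add: S_def A_def right_diff_distrib sum_subtractf)
  have "(\<Sum>n\<in>P. \<Sum>m\<in>P. w n m * (g m - g n) * \<phi> m) = (\<Sum>m\<in>P. \<Sum>n\<in>P. w n m * (g m - g n) * \<phi> m)"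
    by (rule sum.swap)
  also have "\<dots> = (\<Sum>m\<in>P. \<Sum>n\<in>P. - (w m n * (g n - g m) * \<phi> m))"
    by (intro sum.cong refl, subst wsym) (simp add: algebra_simps)
  also have "\<dots> = - A" by (simp add: A_def sum_negf)
  finally have S2: "S = -2 * A" using S1 by simp
  have A2: "A = (\<Sum>n\<in>P. \<eta> n^2 * g n * (\<Sum>m\<in>P. w n m * (g m - g n)))"
    by (simp add: A_def \<phi>_def sum_distrib_left mult_ac)
  have pw: "w n m * (((\<eta> n^2 + \<eta> m^2)/2) * (g m - g n)^2 / 2 - 2 * C0^2 * (\<eta> m - \<eta> n)^2)
      \<le> w n m * (g m - g n) * (\<phi> m - \<phi> n)" for n m
  proof -
    have "((\<eta> n^2 + \<eta> m^2)/2) * (g m - g n)^2 / 2 - 2 * C0^2 * (\<eta> m - \<eta> n)^2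
       \<le> (g m - g n) * (\<eta> m^2 * g m - \<eta> n^2 * g n)"
      by (rule pointwise_ineq[OF gb gb])
    from mult_left_mono[OF this wpos[of n m]] show ?thesis by (simp add: \<phi>_def mult_ac)
  qed
  have "(\<Sum>n\<in>P. \<Sum>m\<in>P. w n m * (((\<eta> n^2 + \<eta> m^2)/2) * (g m - g n)^2 / 2 - 2 * C0^2 * (\<eta> m - \<eta> n)^2)) \<le> S"
    unfolding S_def by (intro sum_mono pw)
  moreover have "(\<Sum>n\<in>P. \<Sum>m\<in>P. w n m * (((\<eta> n^2 + \<eta> m^2)/2) * (g m - g n)^2 / 2 - 2 * C0^2 * (\<eta> m - \<eta> n)^2))
     = (\<Sum>n\<in>P. \<Sum>m\<in>P. w n m * ((\<eta> n^2 + \<eta> m^2)/2) * (g m - g n)^2) / 2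
       - 2 * C0^2 * (\<Sum>n\<in>P. \<Sum>m\<in>P. w n m * (\<eta> m - \<eta> n)^2)"
    by (simp add: right_diff_distrib sum_subtractf sum_divide_distrib sum_distrib_left mult_ac)
  ultimately show ?thesis using S2 A2 by linarith
qed



lemma eta_lip:
  fixes a n m :: int and L :: nat
  assumes "L \<ge> 1"
  shows "\<bar>max 0 (1 - real_of_int \<bar>m - a\<bar> / L) - max 0 (1 - real_of_int \<bar>n - a\<bar> / L)\<bar> \<le> real_of_int \<bar>m - n\<bar> / L"
    and "\<bar>max 0 (1 - real_of_int \<bar>m - a\<bar> / L) - max 0 (1 - real_of_int \<bar>n - a\<bar> / L)\<bar> \<le> 1"
proof -
  have Lp: "real L > 0" using assms by simp
  have "\<bar>(1 - real_of_int \<bar>m - a\<bar> / L) - (1 - real_of_int \<bar>n - a\<bar> / L)\<bar> = \<bar>real_of_int \<bar>n - a\<bar> - real_of_int \<bar>m - a\<bar>\<bar> / L"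
  proof -
    have "(1 - real_of_int \<bar>m - a\<bar> / L) - (1 - real_of_int \<bar>n - a\<bar> / L) = (real_of_int \<bar>n - a\<bar> - real_of_int \<bar>m - a\<bar>) / L"
      using Lp by (simp add: field_simps)
    then show ?thesis by (simp add: abs_divide)
  qed
  also have "\<dots> \<le> real_of_int \<bar>m - n\<bar> / L"
    using Lp by (intro divide_right_mono) (auto simp: abs_if)
  finally have *: "\<bar>(1 - real_of_int \<bar>m - a\<bar> / L) - (1 - real_of_int \<bar>n - a\<bar> / L)\<bar> \<le> real_of_int \<bar>m - n\<bar> / L" .
  have mx: "\<bar>max 0 s - max 0 r\<bar> \<le> \<bar>s - r\<bar>" for s r :: real by (auto simp: max_def)
  show "\<bar>max 0 (1 - real_of_int \<bar>m - a\<bar> / L) - max 0 (1 - real_of_int \<bar>n - a\<bar> / L)\<bar> \<le> real_of_int \<bar>m - n\<bar> / L"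
    using mx * by (rule order_trans)
  have "0 \<le> real_of_int \<bar>m - a\<bar> / L" "0 \<le> real_of_int \<bar>n - a\<bar> / L" using Lp by auto
  moreover have mx1: "0 \<le> s \<Longrightarrow> 0 \<le> r \<Longrightarrow> \<bar>max 0 (1 - s) - max 0 (1 - r)\<bar> \<le> 1" for s r :: real
    unfolding max_def by (auto split: if_splits)
  ultimately show "\<bar>max 0 (1 - real_of_int \<bar>m - a\<bar> / L) - max 0 (1 - real_of_int \<bar>n - a\<bar> / L)\<bar> \<le> 1"
    by blast
qed

lemma term_bound:
  fixes d :: real and j :: int and L :: nat
  assumes "L \<ge> 1" "j \<ge> 1" "\<bar>d\<bar> \<le> real_of_int j / L" "\<bar>d\<bar> \<le> 1"
  shows "d^2 / real_of_int j ^ 3 \<le> 1 / real L ^ 2"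
    and "j \<ge> 2 \<Longrightarrow> d^2 / real_of_int j ^ 3 \<le> 1 / (real L * real_of_int j * (real_of_int j - 1))"
proof -
  have Lp: "real L \<ge> 1" using assms by simp
  have jp: "real_of_int j \<ge> 1" using assms by simp
  define r where "r = real_of_int j"
  have rp: "r \<ge> 1" using jp r_def by simp
  have "\<bar>d\<bar>^2 \<le> (r / L)^2" by (rule power_mono) (use assms in \<open>auto simp: r_def\<close>)
  moreover have "\<bar>d\<bar>^2 \<le> 1^2" by (rule power_mono) (use assms in auto)
  ultimately have d2: "d^2 \<le> (r / L)^2" "d^2 \<le> 1" by auto
  show "d^2 / real_of_int j ^ 3 \<le> 1 / real L ^ 2"
  proof (cases "r \<le> L")
    case True
    have "d^2 / r^3 \<le> (r/L)^2 / r^3" using d2 rp by (intro divide_right_mono) auto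
    also have "\<dots> = 1 / (L^2 * r)" using rp Lp by (simp add: field_simps power2_eq_square power3_eq_cube)
    also have "\<dots> \<le> 1 / L^2" using rp Lp by (simp add: field_simps)
    finally show ?thesis by (simp add: r_def)
  next
    case False
    have "d^2 / r^3 \<le> 1 / r^3" using d2 rp by (intro divide_right_mono) auto
    also have "\<dots> \<le> 1 / L^2"
    proof -
      have A: "real L ^ 2 \<le> r^2" using False Lp by (intro power_mono) auto
      have B: "r^2 \<le> r^3" using rp by (simp add: power_increasing)
      have "real L ^ 2 \<le> r^3" using A B by linarith
      moreover have "r^3 > 0" using rp by simp
      ultimately show ?thesis using Lp by (intro divide_left_mono) simp_all
    qed
    finally show ?thesis by (simp add: r_def)
  qed
  assume j2: "j \<ge> 2"
  then have r2: "r \<ge> 2" unfolding r_def by simp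
  show "d^2 / real_of_int j ^ 3 \<le> 1 / (real L * real_of_int j * (real_of_int j - 1))"
  proof (cases "r \<le> L")
    case True
    have "d^2 / r^3 \<le> (r/L)^2 / r^3" using d2 rp by (intro divide_right_mono) auto
    also have "\<dots> = 1 / (L * (L * r))" using rp Lp by (simp add: field_simps power2_eq_square power3_eq_cube)
    also have "\<dots> \<le> 1 / (L * r * (r - 1))"
    proof -
      have "(L * r) * (r - 1) \<le> (L * r) * L" using True rp Lp by (intro mult_left_mono) auto
      then have "L * r * (r - 1) \<le> L * (L * r)" by (simp add: mult_ac)
      moreover have "0 < L * r * (r - 1)" using r2 Lp by simp
      ultimately show ?thesis by (intro divide_left_mono) auto
    qed
    finally show ?thesis by (simp add: r_def)
  next
    case False
    have "d^2 / r^3 \<le> 1 / r^3" using d2 rp by (intro divide_right_mono) auto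
    also have "\<dots> \<le> 1 / (L * r * (r - 1))"
    proof -
      have "L * (r - 1) \<le> r * r" using False rp Lp by (smt (verit, ccfv_SIG) mult_left_mono mult_right_mono)
      then have "L * r * (r - 1) \<le> r^3" using rp by (simp add: power3_eq_cube mult_ac mult_left_mono)
      moreover have "0 < L * r * (r - 1)" using r2 Lp by simp
      moreover have "0 < r^3" using rp by simp
      ultimately show ?thesis by (intro divide_left_mono) (auto intro: mult_pos_pos)
    qed
    finally show ?thesis by (simp add: r_def)
  qed
qed

lemma telescope:
  fixes K :: int
  assumes "K \<ge> 1"
  shows "J \<ge> K \<Longrightarrow> (\<Sum>i\<in>{K+1..J}. 1 / (real_of_int i * (real_of_int i - 1))) = 1 / K - 1 / J"
proof (induction J rule: int_ge_induct)
  case base then show ?case by simp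
next
  case (step J)
  have "{K+1..J+1} = insert (J+1) {K+1..J}" using step by auto
  then have "(\<Sum>i\<in>{K+1..J+1}. 1 / (real_of_int i * (real_of_int i - 1)))
     = 1 / (real_of_int (J+1) * real_of_int J) + (1 / K - 1 / J)"
    using step by simp
  also have "\<dots> = 1/K - 1/(J+1)"
  proof -
    have y: "real_of_int J \<ge> 1" using \<open>K \<le> J\<close> assms by simp_all
    have gen: "y \<ge> 1 \<Longrightarrow> 1 / ((y+1) * y) + (z - 1/y) = z - 1/(y+1)" for y z :: real
    proof -
      assume y1: "y \<ge> 1"
      then have "y \<noteq> 0" "y + 1 \<noteq> 0" "0 < y * y" by auto
      with y1 have "y + y * y \<noteq> 0" "y * y + y \<noteq> 0" by linarith+
      have "1 / ((y+1) * y) = 1/y - 1/(y+1)"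
        using \<open>y \<noteq> 0\<close> \<open>y + 1 \<noteq> 0\<close> by (simp add: divide_simps)
      then show ?thesis by simp
    qed
    show ?thesis using gen[OF y, of "1/K"] by simp
  qed
  finally show ?case by simp
qed



lemma row_sum_bound:
  fixes u :: "int \<Rightarrow> real" and n J :: int and Q :: "int set"
  assumes "Q \<subseteq> {n-J..n+J}" "\<And>i. u i \<ge> 0" "\<And>i. u (-i) = u i" "u 0 = 0" "J \<ge> 0"
  shows "(\<Sum>m\<in>Q. u (m - n)) \<le> 2 * (\<Sum>i\<in>{1..J}. u i)"
proof -
  have "(\<Sum>m\<in>Q. u (m - n)) \<le> (\<Sum>m\<in>{n-J..n+J}. u (m - n))"
    using assms by (intro sum_mono2) auto
  also have "\<dots> = (\<Sum>i\<in>{-J..J}. u i)"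
    by (rule sum.reindex_bij_witness[of _ "\<lambda>i. i + n" "\<lambda>m. m - n"]) auto
  also have "{-J..J} = {-J..-1} \<union> {0} \<union> {1..J}" using assms by auto
  also have "(\<Sum>i\<in>{-J..-1} \<union> {0} \<union> {1..J}. u i) = (\<Sum>i\<in>{-J..-1}. u i) + u 0 + (\<Sum>i\<in>{1..J}. u i)"
    by (subst sum.union_disjoint; auto)+
  also have "(\<Sum>i\<in>{-J..-1}. u i) = (\<Sum>i\<in>{1..J}. u i)"
    by (rule sum.reindex_bij_witness[of _ "\<lambda>i. - i" "\<lambda>i. - i"]) (auto simp: assms)
  finally show ?thesis using assms by simp
qed

lemma harm_part:
  fixes L K :: nat and J :: int
  assumes L1: "L \<ge> 1" and K1: "K \<ge> 1"
  defines "u \<equiv> \<lambda>i::int. (if i = 0 then 0 else if \<bar>i\<bar> \<le> int K then 1 / real L ^ 2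
      else 1 / (real L * real_of_int \<bar>i\<bar> * (real_of_int \<bar>i\<bar> - 1)))"
  shows "(\<Sum>i\<in>{1..J}. u i) \<le> K / real L ^ 2 + 1 / (real L * K)"
proof -
  have upos: "u i \<ge> 0" for i
  proof -
    have "real_of_int \<bar>i\<bar> - 1 \<ge> 0" if "\<bar>i\<bar> > int K" using that K1 by simp
    then show ?thesis unfolding u_def by auto
  qed
  define J' where "J' = max J (int K)"
  have "(\<Sum>i\<in>{1..J}. u i) \<le> (\<Sum>i\<in>{1..J'}. u i)"
    by (intro sum_mono2) (auto simp: J'_def upos)
  also have "{1..J'} = {1..int K} \<union> {int K+1..J'}" using K1 by (auto simp: J'_def)
  also have "(\<Sum>i\<in>{1..int K} \<union> {int K+1..J'}. u i) = (\<Sum>i\<in>{1..int K}. u i) + (\<Sum>i\<in>{int K+1..J'}. u i)"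
    by (rule sum.union_disjoint) auto
  also have "(\<Sum>i\<in>{1..int K}. u i) = K / real L ^ 2"
  proof -
    have "(\<Sum>i\<in>{1..int K}. u i) = (\<Sum>i\<in>{1..int K}. 1 / real L ^ 2)"
      by (intro sum.cong) (auto simp: u_def)
    then show ?thesis by simp
  qed
  also have "(\<Sum>i\<in>{int K+1..J'}. u i) = (\<Sum>i\<in>{int K+1..J'}. 1 / (real_of_int i * (real_of_int i - 1))) / L"
    by (simp add: sum_divide_distrib u_def, intro sum.cong) (auto simp: field_simps)
  also have "\<dots> = (1 / int K - 1 / J') / L"
    using telescope[of "int K" J'] K1 by (simp add: J'_def)
  also have "\<dots> \<le> 1 / (real L * K)"
  proof -
    have "J' \<ge> 1" using K1 by (simp add: J'_def)
    then have "1 / real_of_int J' \<ge> 0" by simp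
    then have "(1 / int K - 1 / J') \<le> 1 / K" by simp
    then have "(1 / int K - 1 / J') / L \<le> (1/K) / L" using L1 by (intro divide_right_mono) auto
    then show ?thesis by (simp add: field_simps)
  qed
  finally show ?thesis by simp
qed



lemma energy_bound:
  fixes a M :: int and L K :: nat and \<eta> :: "int \<Rightarrow> real"
  assumes L1: "L \<ge> 1" and K1: "K \<ge> 1" and M0: "M \<ge> 0"
    and eta: "\<And>n. \<eta> n = max 0 (1 - real_of_int \<bar>n - a\<bar> / L)"
  shows "(\<Sum>n\<in>{a-M..a+M}. \<Sum>m\<in>{a-M..a+M}. if m = n then 0 else (\<eta> m - \<eta> n)^2 / real_of_int \<bar>m-n\<bar> ^ 3)
     \<le> 8 * K / L + 8 / K"
proof -
  define P where "P = {a-M..a+M}"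
  define u where "u = (\<lambda>i::int. (if i = 0 then 0 else if \<bar>i\<bar> \<le> int K then 1 / real L ^ 2
      else 1 / (real L * real_of_int \<bar>i\<bar> * (real_of_int \<bar>i\<bar> - 1))))"
  define ch where "ch = (\<lambda>n::int. if \<bar>n - a\<bar> < int L then 1 else (0::real))"
  have finP: "finite P" by (simp add: P_def)
  define B where "B = K / real L ^ 2 + 1 / (real L * K)"
  have upos: "u i \<ge> 0" for i
  proof -
    have "real_of_int \<bar>i\<bar> - 1 \<ge> 0" if "\<bar>i\<bar> > int K" using that K1 by simp
    then show ?thesis unfolding u_def by auto
  qed
  have usym: "u (-i) = u i" for i by (simp add: u_def)
  have chi01: "0 \<le> ch n" "ch n \<le> 1" for n by (auto simp: ch_def)
  have tb: "(if m = n then 0 else (\<eta> m - \<eta> n)^2 / real_of_int \<bar>m-n\<bar> ^ 3) \<le> (ch n + ch m) * u (m - n)" for n m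
  proof (cases "m = n")
    case True then show ?thesis by (simp add: u_def)
  next
    case False
    show ?thesis
    proof (cases "ch n = 0 \<and> ch m = 0")
      case True
      then have "\<bar>n - a\<bar> \<ge> int L" "\<bar>m - a\<bar> \<ge> int L" by (auto simp: ch_def split: if_splits)
      then have "real_of_int \<bar>n - a\<bar> / L \<ge> 1" "real_of_int \<bar>m - a\<bar> / L \<ge> 1" using L1 by (auto simp: field_simps)
      then have "\<eta> n = 0" "\<eta> m = 0" by (auto simp: eta)
      then show ?thesis using False True by simp
    next
      case False2: False
      then have chis: "ch n + ch m \<ge> 1" using chi01 by (auto simp: ch_def split: if_splits)
      define j where "j = \<bar>m - n\<bar>"
      have j1: "j \<ge> 1" using False by (simp add: j_def)
      have d1: "\<bar>\<eta> m - \<eta> n\<bar> \<le> real_of_int j / L" "\<bar>\<eta> m - \<eta> n\<bar> \<le> 1"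
        using eta_lip[OF L1, of m a n] by (simp_all add: eta j_def)
      have "(\<eta> m - \<eta> n)^2 / real_of_int j ^ 3 \<le> u (m - n)"
      proof (cases "j \<le> int K")
        case True
        then show ?thesis using term_bound(1)[OF L1 j1 d1] False by (simp add: u_def j_def)
      next
        case False3: False
        then have "j \<ge> 2" using K1 by simp
        then show ?thesis using term_bound(2)[OF L1 j1 d1] False False3 by (simp add: u_def j_def)
      qed
      also have "\<dots> \<le> (ch n + ch m) * u (m - n)" using chis upos[of "m-n"]
        using mult_right_mono[OF chis upos[of "m-n"]] by simp
      finally show ?thesis using False by (simp add: j_def)
    qed
  qed
  define A where "A = (\<Sum>n\<in>P. \<Sum>m\<in>P. ch n * u (m - n))"
  have S1: "(\<Sum>n\<in>P. \<Sum>m\<in>P. if m = n then 0 else (\<eta> m - \<eta> n)^2 / real_of_int \<bar>m-n\<bar> ^ 3)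
      \<le> (\<Sum>n\<in>P. \<Sum>m\<in>P. (ch n + ch m) * u (m - n))"
    by (intro sum_mono tb)
  have S2a: "(\<Sum>n\<in>P. \<Sum>m\<in>P. (ch n + ch m) * u (m - n)) = A + (\<Sum>n\<in>P. \<Sum>m\<in>P. ch m * u (m - n))"
    by (simp add: A_def distrib_right sum.distrib)
  have S2b: "(\<Sum>n\<in>P. \<Sum>m\<in>P. ch m * u (m - n)) = (\<Sum>m\<in>P. \<Sum>n\<in>P. ch m * u (m - n))"
    by (rule sum.swap)
  have S2c: "(\<Sum>m\<in>P. \<Sum>n\<in>P. ch m * u (m - n)) = A"
    unfolding A_def by (intro sum.cong refl) (metis usym minus_diff_eq)
  have "A \<le> (\<Sum>n\<in>P. ch n * (2 * B))" unfolding A_def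

  proof (intro sum_mono)
    fix n assume n: "n \<in> P"
    have "(\<Sum>m\<in>P. u (m - n)) \<le> 2 * (\<Sum>i\<in>{1..2*M}. u i)"
      by (rule row_sum_bound) (use n M0 usym upos in \<open>auto simp: P_def u_def\<close>)
    also have "(\<Sum>i\<in>{1..2*M}. u i) \<le> B"
      unfolding u_def B_def by (rule harm_part[OF L1 K1])
    finally have "(\<Sum>m\<in>P. u (m - n)) \<le> 2 * B" by simp
    then show "(\<Sum>m\<in>P. ch n * u (m - n)) \<le> ch n * (2 * B)"
      using chi01[of n] by (simp add: sum_distrib_left[symmetric] mult_left_mono)
  qed
  also have "\<dots> = 2 * B * (\<Sum>n\<in>P. ch n)" by (simp add: sum_distrib_left sum_distrib_right mult_ac)
  finally have S3: "A \<le> 2 * B * (\<Sum>n\<in>P. ch n)" .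
  have S4: "(\<Sum>n\<in>P. ch n) \<le> 2 * L"
  proof -
    define Q where "Q = {a - int L + 1 .. a + int L - 1}"
    have "(\<Sum>n\<in>P. ch n) \<le> (\<Sum>n\<in>P \<union> Q. ch n)"
      using chi01 by (intro sum_mono2) (auto simp: P_def Q_def)
    also have "\<dots> = (\<Sum>n\<in>Q. ch n)"
      by (rule sum.mono_neutral_right) (auto simp: Q_def ch_def finP)
    also have "\<dots> \<le> (\<Sum>n\<in>Q. 1)" using chi01 by (intro sum_mono) auto
    also have "\<dots> = real (nat (2 * int L - 1))" by (simp add: Q_def)
    also have "\<dots> \<le> 2 * L" using L1 by simp
    finally show ?thesis .
  qed
  then have "2 * B * (\<Sum>n\<in>P. ch n) \<le> 2 * B * (2 * L)"
    using L1 K1 by (intro mult_left_mono) (auto simp: B_def)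
  with S3 have "A \<le> 2 * B * (2 * L)" by linarith
  moreover have "2 * (2 * B * (2 * L)) = 8 * K / L + 8 / K" unfolding B_def using L1 K1 by (simp add: field_simps power2_eq_square)
  ultimately have "(\<Sum>n\<in>P. \<Sum>m\<in>P. if m = n then 0 else (\<eta> m - \<eta> n)^2 / real_of_int \<bar>m-n\<bar> ^ 3)
     \<le> 8 * K / L + 8 / K" using S1 S2a S2b S2c by linarith
  then show ?thesis by (simp only: P_def)
qed



definition Fo :: "(int \<Rightarrow> real) \<Rightarrow> int \<Rightarrow> int \<Rightarrow> real" where
  "Fo x n m = real_of_int (sgn (m - n)) / (x m - x n)^2"

definition Tm :: "(int \<Rightarrow> real) \<Rightarrow> int \<Rightarrow> int \<Rightarrow> real" where
  "Tm x n m = Fo x n m - Fo x (n+1) (m+1)"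

definition wt :: "(int \<Rightarrow> real) \<Rightarrow> int \<Rightarrow> int \<Rightarrow> real" where
  "wt x n m = (\<bar>x m - x n\<bar> + \<bar>x (m+1) - x (n+1)\<bar>) / ((x m - x n)^2 * (x (m+1) - x (n+1))^2)"

lemma dist_bounds:
  fixes x :: "int \<Rightarrow> real"
  assumes lo: "\<And>n. c \<le> x (n+1) - x n" and hi: "\<And>n. x (n+1) - x n \<le> C"
  shows "n \<le> m \<Longrightarrow> c * real_of_int (m - n) \<le> x m - x n \<and> x m - x n \<le> C * real_of_int (m - n)"
proof (induction m rule: int_ge_induct)
  case base then show ?case by simp
next
  case (step m)
  have "x (m+1) - x n = (x m - x n) + (x (m+1) - x m)" by simp
  then show ?case using step.IH lo[of m] hi[of m] by (simp add: algebra_simps)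
qed

lemma row_has_sum:
  fixes x :: "int \<Rightarrow> real"
  assumes sm: "strict_mono x"
    and sl: "(\<lambda>m. 1 / (x n - x m)^2) summable_on {m. m < n}"
    and sr: "(\<lambda>m. 1 / (x m - x n)^2) summable_on {m. m > n}"
    and eq: "(\<Sum>\<^sub>\<infinity>m\<in>{m. m < n}. 1 / (x n - x m)^2) = (\<Sum>\<^sub>\<infinity>m\<in>{m. m > n}. 1 / (x m - x n)^2)"
  shows "((\<lambda>m. Fo x n m) has_sum 0) {m. m \<noteq> n}"
proof -
  define Ls where "Ls = (\<Sum>\<^sub>\<infinity>m\<in>{m. m < n}. 1 / (x n - x m)^2)"
  have hr: "((\<lambda>m. 1 / (x m - x n)^2) has_sum Ls) {m. m > n}"
    using has_sum_infsum[OF sr] eq by (simp add: Ls_def)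
  have hr': "((\<lambda>m. Fo x n m) has_sum Ls) {m. m > n}"
    using hr by (subst has_sum_cong[where g = "\<lambda>m. 1 / (x m - x n)^2"]) (auto simp: Fo_def)
  have hl: "((\<lambda>m. - (1 / (x n - x m)^2)) has_sum (- Ls)) {m. m < n}"
    using has_sum_infsum[OF sl] by (simp add: has_sum_uminus Ls_def)
  have hl': "((\<lambda>m. Fo x n m) has_sum (- Ls)) {m. m < n}"
    using hl by (subst has_sum_cong[where g = "\<lambda>m. - (1 / (x n - x m)^2)"]) (auto simp: Fo_def power2_commute)
  have "((\<lambda>m. Fo x n m) has_sum (Ls + - Ls)) ({m. m > n} \<union> {m. m < n})"
    by (rule has_sum_Un_disjoint[OF hr' hl']) auto
  moreover have "{m. m > n} \<union> {m. m < n} = {m. m \<noteq> n}" by auto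
  ultimately show ?thesis by simp
qed

lemma Tm_has_sum:
  fixes x :: "int \<Rightarrow> real"
  assumes "\<And>n. ((\<lambda>m. Fo x n m) has_sum 0) {m. m \<noteq> n}"
  shows "((\<lambda>m. Tm x n m) has_sum 0) UNIV"
proof -
  have inj: "inj_on (\<lambda>m::int. m + 1) {m. m \<noteq> n}" by (auto simp: inj_on_def)
  have img: "(\<lambda>m::int. m + 1) ` {m. m \<noteq> n} = {m. m \<noteq> n + 1}"
    by (auto simp: image_def) (metis add_diff_cancel_right' diff_add_cancel)
  have "((\<lambda>m. Fo x (n+1) m) has_sum 0) ((\<lambda>m::int. m + 1) ` {m. m \<noteq> n})"
    using assms[of "n+1"] img by simp
  then have h1: "(((\<lambda>m. Fo x (n+1) m) \<circ> (\<lambda>m. m + 1)) has_sum 0) {m. m \<noteq> n}"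
    using has_sum_reindex[OF inj] by blast
  have h2: "((\<lambda>m. - Fo x (n+1) (m+1)) has_sum (- 0)) {m. m \<noteq> n}"
    using h1 by (simp add: has_sum_uminus o_def)
  have "((\<lambda>m. Fo x n m + - Fo x (n+1) (m+1)) has_sum (0 + - 0)) {m. m \<noteq> n}"
    by (rule has_sum_add[OF assms[of n] h2])
  then have h3: "((\<lambda>m. Tm x n m) has_sum 0) {m. m \<noteq> n}"
    by (simp add: Tm_def)
  have "((\<lambda>m. Tm x n m) has_sum 0) UNIV \<longleftrightarrow> ((\<lambda>m. Tm x n m) has_sum 0) {m. m \<noteq> n}"
    by (rule has_sum_cong_neutral) (auto simp: Tm_def Fo_def)
  with h3 show ?thesis by simp
qed

lemma Tm_eq:
  fixes x :: "int \<Rightarrow> real"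
  assumes sm: "strict_mono x"
  shows "Tm x n m = wt x n m * ((x (m+1) - x m) - (x (n+1) - x n))"
proof -
  define D where "D = x m - x n"
  define D' where "D' = x (m+1) - x (n+1)"
  have dd: "(x (m+1) - x m) - (x (n+1) - x n) = D' - D" by (simp add: D_def D'_def)
  consider "m = n" | "n < m" | "m < n" by linarith
  then show ?thesis
  proof cases
    case 1 then show ?thesis by (simp add: Tm_def Fo_def)
  next
    case 2
    then have "D > 0" "D' > 0" using sm by (auto simp: D_def D'_def strict_mono_def)
    moreover have t: "Tm x n m = 1 / D^2 - 1 / D'^2" using 2 by (simp add: Tm_def Fo_def D_def D'_def)
    moreover have w: "wt x n m = (D + D') / (D^2 * D'^2)" using calculation by (simp add: wt_def D_def D'_def)
    moreover have "1 / D^2 - 1 / D'^2 = (D + D') / (D^2 * D'^2) * (D' - D)"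
      using calculation by (simp add: field_simps power2_eq_square)
    ultimately show ?thesis unfolding dd t w by simp
  next
    case 3
    then have "D < 0" "D' < 0" using sm by (auto simp: D_def D'_def strict_mono_def)
    moreover have t: "Tm x n m = - 1 / D^2 + 1 / D'^2" using 3 by (simp add: Tm_def Fo_def D_def D'_def)
    moreover have w: "wt x n m = (- D - D') / (D^2 * D'^2)" using calculation by (simp add: wt_def D_def D'_def)
    moreover have "- 1 / D^2 + 1 / D'^2 = (- D - D') / (D^2 * D'^2) * (D' - D)"
      using calculation by (simp add: field_simps power2_eq_square)
    ultimately show ?thesis unfolding dd t w by simp
  qed
qed

lemma wt_sym: "wt x n m = wt x m n"
  by (simp add: wt_def abs_minus_commute power2_commute add.commute)

lemma wt_nonneg: "wt x n m \<ge> 0"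
  by (simp add: wt_def)



lemma absdist:
  fixes x :: "int \<Rightarrow> real"
  assumes lo: "\<And>n. c \<le> x (n+1) - x n" and hi: "\<And>n. x (n+1) - x n \<le> C" and c0: "c > 0"
  shows "c * real_of_int \<bar>m - n\<bar> \<le> \<bar>x m - x n\<bar> \<and> \<bar>x m - x n\<bar> \<le> C * real_of_int \<bar>m - n\<bar>"
proof (cases "n \<le> m")
  case True
  then have "c * real_of_int (m - n) \<le> x m - x n \<and> x m - x n \<le> C * real_of_int (m - n)"
    by (rule dist_bounds[where c=c and x=x and C=C, OF lo hi])
  moreover have "0 \<le> c * real_of_int (m - n)" using c0 True by simp
  ultimately show ?thesis using True by auto
next
  case False
  then have "c * real_of_int (n - m) \<le> x n - x m \<and> x n - x m \<le> C * real_of_int (n - m)"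
    by (intro dist_bounds[where c=c and x=x and C=C, OF lo hi]) auto
  moreover have "0 \<le> c * real_of_int (n - m)" using c0 False by simp
  ultimately show ?thesis using False by (auto simp: abs_minus_commute)
qed

lemma wt_upper:
  fixes x :: "int \<Rightarrow> real"
  assumes lo: "\<And>n. c \<le> x (n+1) - x n" and hi: "\<And>n. x (n+1) - x n \<le> C" and c0: "c > 0"
    and mn: "m \<noteq> n"
  shows "wt x n m \<le> (2*C/c^4) / real_of_int \<bar>m - n\<bar> ^ 3"
proof -
  define j where "j = real_of_int \<bar>m - n\<bar>"
  have j1: "j \<ge> 1" using mn by (simp add: j_def)
  define A where "A = \<bar>x m - x n\<bar>"
  define B where "B = \<bar>x (m+1) - x (n+1)\<bar>"
  have A: "c * j \<le> A" "A \<le> C * j" using absdist[where c=c and x=x and C=C, OF lo hi c0, of m n] by (auto simp: A_def j_def)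
  have B: "c * j \<le> B" "B \<le> C * j" using absdist[where c=c and x=x and C=C, OF lo hi c0, of "m+1" "n+1"] by (auto simp: B_def j_def)
  have cj: "c * j > 0" using c0 j1 by simp
  have w: "wt x n m = (A + B) / (A^2 * B^2)" by (simp add: wt_def A_def B_def)
  have num: "A + B \<le> 2 * C * j" using A B by linarith
  have "(c*j)^2 \<le> A^2" "(c*j)^2 \<le> B^2" using A B cj by (auto intro!: power_mono)
  then have den: "(c*j)^2 * (c*j)^2 \<le> A^2 * B^2" by (intro mult_mono) auto
  have "(A + B) / (A^2 * B^2) \<le> (2 * C * j) / ((c*j)^2 * (c*j)^2)"
    using num den cj A B by (intro frac_le) auto
  also have "\<dots> = (2*C/c^4) / j ^ 3" using cj c0 j1 by (simp add: field_simps power2_eq_square power3_eq_cube power4_eq_xxxx)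
  finally show ?thesis by (simp add: w j_def)
qed

lemma wt_lower1:
  fixes x :: "int \<Rightarrow> real"
  assumes lo: "\<And>n. c \<le> x (n+1) - x n" and hi: "\<And>n. x (n+1) - x n \<le> C" and c0: "c > 0"
  shows "wt x n (n+1) \<ge> 2*c/C^4"
proof -
  define A where "A = x (n+1) - x n"
  define B where "B = x (n+1+1) - x (n+1)"
  have A: "c \<le> A" "A \<le> C" using lo[of n] hi[of n] by (auto simp: A_def)
  have B: "c \<le> B" "B \<le> C" using lo[of "n+1"] hi[of "n+1"] by (auto simp: B_def)
  have w: "wt x n (n+1) = (A + B) / (A^2 * B^2)" using A B c0 by (simp add: wt_def A_def B_def)
  have "A^2 \<le> C^2" "B^2 \<le> C^2" using A B c0 by (auto intro!: power_mono)
  then have den: "A^2 * B^2 \<le> C^2 * C^2" by (intro mult_mono) auto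
  have "2*c/(C^2*C^2) \<le> (A + B) / (A^2 * B^2)"
    using den A B c0 by (intro frac_le) auto
  then show ?thesis by (simp add: w power2_eq_square power4_eq_xxxx mult_ac)
qed



lemma fl_Pm:
  fixes a :: int
  shows "filterlim (\<lambda>M::nat. {a - int M .. a + int M}) (finite_subsets_at_top UNIV) sequentially"
  unfolding filterlim_finite_subsets_at_top
proof (safe)
  fix X :: "int set" assume fX: "finite X"
  define b where "b = Max (insert 0 ((\<lambda>y. nat \<bar>y - a\<bar>) ` X))"
  have "nat \<bar>y - a\<bar> \<le> b" if "y \<in> X" for y
    unfolding b_def using fX that by (intro Max_ge) auto
  then have sub: "X \<subseteq> {a - int M .. a + int M}" if "M \<ge> b" for M
    using that by force
  show "\<forall>\<^sub>F M in sequentially. finite {a - int M..a + int M} \<and> X \<subseteq> {a - int M..a + int M} \<and> {a - int M..a + int M} \<subseteq> UNIV"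
  proof (rule eventually_mono[OF eventually_ge_at_top[of b]])
    fix M assume "b \<le> M"
    then show "finite {a - int M..a + int M} \<and> X \<subseteq> {a - int M..a + int M} \<and> {a - int M..a + int M} \<subseteq> UNIV"
      using sub by auto
  qed
qed

lemma partial_to_zero:
  fixes f :: "int \<Rightarrow> real"
  assumes "(f has_sum 0) UNIV"
  shows "(\<lambda>M::nat. \<Sum>m\<in>{a - int M .. a + int M}. f m) \<longlonglongrightarrow> 0"
proof -
  have "(sum f \<longlongrightarrow> 0) (finite_subsets_at_top UNIV)" using assms by (simp add: has_sum_def)
  from filterlim_compose[OF this fl_Pm[of a]] show ?thesis by simp
qed



theorem mainTheorem5:
  fixes x :: "int \<Rightarrow> real"
  assumes "equilibrium_configuration (\<lambda>d. 1 / d\<^sup>2) x"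
    and "uniformly_discrete x"
    and "\<exists>N::int. \<exists>k::int. \<exists>t::real. k \<ge> 1 \<and> t > 0 \<and>
           ((\<forall>n\<ge>N. x (n + k) = x n + t) \<or> (\<forall>n\<le>N. x (n + k) = x n + t))"
  shows "trivial_configuration x"
proof -
  have sm: "strict_mono x" and eqs: "\<And>n. in_equilibrium (\<lambda>d. 1 / d\<^sup>2) x n"
    using assms(1) by (auto simp: equilibrium_configuration_def configuration_def)
  obtain c C where c0: "0 < c" "c \<le> C" and gap: "\<And>n. c \<le> x n - x (n - 1) \<and> x n - x (n - 1) \<le> C"
    using assms(2) unfolding uniformly_discrete_def by blast
  have lo: "c \<le> x (n+1) - x n" for n using gap[of "n+1"] by simp
  have hi: "x (n+1) - x n \<le> C" for n using gap[of "n+1"] by simp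
  have Fo_row: "((\<lambda>m. Fo x n m) has_sum 0) {m. m \<noteq> n}" for n
    using eqs[of n] by (intro row_has_sum[OF sm]) (auto simp: in_equilibrium_def)
  have Trow: "((\<lambda>m. Tm x n m) has_sum 0) UNIV" for n
    by (rule Tm_has_sum[OF Fo_row])
  define g where "g n = x (n+1) - x n" for n
  have Teq: "Tm x n m = wt x n m * (g m - g n)" for n m
    by (simp add: Tm_eq[OF sm] g_def)
  have gb: "\<bar>g n\<bar> \<le> C" for n using lo[of n] hi[of n] c0 by (simp add: g_def)
  define \<beta> where "\<beta> = 2*C/c^4"
  have \<beta>0: "\<beta> > 0" using c0 by (simp add: \<beta>_def)
  have key: "g (a+1) = g a" for a
  proof (rule ccontr)
    assume ne: "g (a+1) \<noteq> g a"
    define \<kappa> where "\<kappa> = (c / C^4) * (g (a+1) - g a)^2"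
    have \<kappa>0: "\<kappa> > 0" using ne c0 by (simp add: \<kappa>_def)
    have main: "\<kappa> \<le> 4*C^2*\<beta>*(8*K/L + 8/K)" if K1: "K \<ge> 1" and L1: "L \<ge> 1" for K L :: nat
    proof -
      define \<eta> where "\<eta> n = max 0 (1 - real_of_int \<bar>n - a\<bar> / L)" for n
      define Pm where "Pm M = {a - int M .. a + int M}" for M
      define \<Phi> where "\<Phi> M = (\<Sum>n\<in>Pm M. \<eta> n^2 * g n * (\<Sum>m\<in>Pm M. wt x n m * (g m - g n)))" for M
      define R where "R = 4*C^2*\<beta>*(8*K/L + 8/K)"
      have ineq: "\<kappa> \<le> -4 * \<Phi> M + R" if M1: "M \<ge> 1" for M
      proof -
        have fin: "finite (Pm M)" by (simp add: Pm_def)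
        have cac: "(\<Sum>n\<in>Pm M. \<Sum>m\<in>Pm M. wt x n m * ((\<eta> n^2 + \<eta> m^2)/2) * (g m - g n)^2)
            \<le> -4 * \<Phi> M + 4*C^2*(\<Sum>n\<in>Pm M. \<Sum>m\<in>Pm M. wt x n m * (\<eta> m - \<eta> n)^2)"
          unfolding \<Phi>_def by (rule caccioppoli[OF fin wt_sym wt_nonneg gb])
        have aP: "a \<in> Pm M" "a + 1 \<in> Pm M" using M1 by (auto simp: Pm_def)
        have Wnn: "0 \<le> wt x n m * ((\<eta> n^2 + \<eta> m^2)/2) * (g m - g n)^2" for n m
          by (intro mult_nonneg_nonneg wt_nonneg) auto
        have "wt x a (a+1) * ((\<eta> a^2 + \<eta> (a+1)^2)/2) * (g (a+1) - g a)^2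
            \<le> (\<Sum>m\<in>Pm M. wt x a m * ((\<eta> a^2 + \<eta> m^2)/2) * (g m - g a)^2)"
          by (rule member_le_sum[OF aP(2)]) (use Wnn fin in auto)
        also have "\<dots> \<le> (\<Sum>n\<in>Pm M. \<Sum>m\<in>Pm M. wt x n m * ((\<eta> n^2 + \<eta> m^2)/2) * (g m - g n)^2)"
          by (rule member_le_sum[OF aP(1)]) (use Wnn fin in \<open>auto intro: sum_nonneg\<close>)
        finally have L1': "wt x a (a+1) * ((\<eta> a^2 + \<eta> (a+1)^2)/2) * (g (a+1) - g a)^2
            \<le> (\<Sum>n\<in>Pm M. \<Sum>m\<in>Pm M. wt x n m * ((\<eta> n^2 + \<eta> m^2)/2) * (g m - g n)^2)" .
        have eta_a: "\<eta> a = 1" by (simp add: \<eta>_def)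
        have h: "(\<eta> a^2 + \<eta> (a+1)^2)/2 \<ge> 1/2" by (simp add: eta_a)
        have wl: "wt x a (a+1) \<ge> 2*c/C^4" by (rule wt_lower1[where c=c and x=x and C=C, OF lo hi c0(1)])
        have "\<kappa> = (2*c/C^4) * (1/2) * (g (a+1) - g a)^2" by (simp add: \<kappa>_def)
        also have "\<dots> \<le> wt x a (a+1) * ((\<eta> a^2 + \<eta> (a+1)^2)/2) * (g (a+1) - g a)^2"
          using wl h c0 wt_nonneg[of x a "a+1"] by (intro mult_right_mono mult_mono) auto
        finally have k1: "\<kappa> \<le> (\<Sum>n\<in>Pm M. \<Sum>m\<in>Pm M. wt x n m * ((\<eta> n^2 + \<eta> m^2)/2) * (g m - g n)^2)"
          using L1' by linarith
        have en: "(\<Sum>n\<in>Pm M. \<Sum>m\<in>Pm M. wt x n m * (\<eta> m - \<eta> n)^2)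
            \<le> (\<Sum>n\<in>Pm M. \<Sum>m\<in>Pm M. \<beta> * (if m = n then 0 else (\<eta> m - \<eta> n)^2 / real_of_int \<bar>m-n\<bar> ^ 3))"
        proof (intro sum_mono)
          fix n m
          show "wt x n m * (\<eta> m - \<eta> n)^2 \<le> \<beta> * (if m = n then 0 else (\<eta> m - \<eta> n)^2 / real_of_int \<bar>m-n\<bar> ^ 3)"
          proof (cases "m = n")
            case True then show ?thesis by simp
          next
            case False
            have "wt x n m * (\<eta> m - \<eta> n)^2 \<le> (\<beta> / real_of_int \<bar>m - n\<bar> ^ 3) * (\<eta> m - \<eta> n)^2"
              using wt_upper[where c=c and x=x and C=C, OF lo hi c0(1) False] by (intro mult_right_mono) (auto simp: \<beta>_def)
            then show ?thesis using False by simp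
          qed
        qed
        also have "\<dots> = \<beta> * (\<Sum>n\<in>Pm M. \<Sum>m\<in>Pm M. if m = n then 0 else (\<eta> m - \<eta> n)^2 / real_of_int \<bar>m-n\<bar> ^ 3)"
          by (simp add: sum_distrib_left)
        also have "\<dots> \<le> \<beta> * (8*K/L + 8/K)"
          using energy_bound[OF L1 K1, of "int M" \<eta> a] \<beta>0 by (intro mult_left_mono) (auto simp: Pm_def \<eta>_def)
        finally have "4*C^2*(\<Sum>n\<in>Pm M. \<Sum>m\<in>Pm M. wt x n m * (\<eta> m - \<eta> n)^2) \<le> 4*C^2*(\<beta> * (8*K/L + 8/K))"
          by (intro mult_left_mono) auto
        moreover have "4*C^2*(\<beta> * (8*K/L + 8/K)) = R" by (simp add: R_def)
        ultimately show ?thesis using k1 cac by linarith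
      qed
      have lim: "\<Phi> \<longlonglongrightarrow> 0"
      proof -
        define S where "S = {a - int L .. a + int L}"
        have ev: "\<forall>\<^sub>F M in sequentially. \<Phi> M = (\<Sum>n\<in>S. \<eta> n^2 * g n * (\<Sum>m\<in>Pm M. Tm x n m))"
        proof (rule eventually_mono[OF eventually_ge_at_top[of L]])
          fix M assume hML: "L \<le> M"
          have "\<Phi> M = (\<Sum>n\<in>Pm M. \<eta> n^2 * g n * (\<Sum>m\<in>Pm M. Tm x n m))"
            by (simp add: \<Phi>_def Teq)
          also have "\<dots> = (\<Sum>n\<in>S. \<eta> n^2 * g n * (\<Sum>m\<in>Pm M. Tm x n m))"
          proof (rule sum.mono_neutral_right)
            show "finite (Pm M)" by (simp add: Pm_def)
            show "S \<subseteq> Pm M" using hML by (auto simp: S_def Pm_def)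
            show "\<forall>i\<in>Pm M - S. \<eta> i^2 * g i * (\<Sum>m\<in>Pm M. Tm x i m) = 0"
            proof
              fix i assume "i \<in> Pm M - S"
              then have "\<bar>i - a\<bar> > int L" by (auto simp: S_def)
              then have "real_of_int \<bar>i - a\<bar> / L \<ge> 1" using L1 by (simp add: field_simps)
              then have "\<eta> i = 0" by (simp add: \<eta>_def)
              then show "\<eta> i^2 * g i * (\<Sum>m\<in>Pm M. Tm x i m) = 0" by simp
            qed
          qed
          finally show "\<Phi> M = (\<Sum>n\<in>S. \<eta> n^2 * g n * (\<Sum>m\<in>Pm M. Tm x n m))" .
        qed
        have "(\<lambda>M. \<Sum>n\<in>S. \<eta> n^2 * g n * (\<Sum>m\<in>Pm M. Tm x n m)) \<longlonglongrightarrow> (\<Sum>n\<in>S. \<eta> n^2 * g n * 0)"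
          by (intro tendsto_sum tendsto_mult tendsto_const)
             (unfold Pm_def, rule partial_to_zero[OF Trow])
        then have "(\<lambda>M. \<Sum>n\<in>S. \<eta> n^2 * g n * (\<Sum>m\<in>Pm M. Tm x n m)) \<longlonglongrightarrow> 0" by simp
        moreover have "\<forall>\<^sub>F M in sequentially. (\<Sum>n\<in>S. \<eta> n^2 * g n * (\<Sum>m\<in>Pm M. Tm x n m)) = \<Phi> M"
          using ev by (rule eventually_mono) simp
        ultimately show ?thesis by (rule Lim_transform_eventually)
      qed
      show "\<kappa> \<le> 4*C^2*\<beta>*(8*K/L + 8/K)"
      proof (rule ccontr)
        assume "\<not> ?thesis"
        then have gt: "\<kappa> > R" by (simp add: R_def)
        define \<epsilon> where "\<epsilon> = (\<kappa> - R) / 8"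
        have \<epsilon>0: "\<epsilon> > 0" using gt by (simp add: \<epsilon>_def)
        have "\<forall>\<^sub>F M in sequentially. dist (\<Phi> M) 0 < \<epsilon>" using lim \<epsilon>0 by (rule tendstoD)
        then obtain M0 where M0: "\<And>M. M \<ge> M0 \<Longrightarrow> \<bar>\<Phi> M\<bar> < \<epsilon>" by (auto simp: eventually_sequentially)
        define M where "M = max M0 1"
        have "\<bar>\<Phi> M\<bar> < \<epsilon>" using M0 by (simp add: M_def)
        moreover have "\<kappa> \<le> -4 * \<Phi> M + R" by (rule ineq) (simp add: M_def)
        ultimately show False using gt unfolding \<epsilon>_def abs_less_iff by (elim conjE) argo
      qed
    qed
    define K :: nat where "K = nat \<lceil>64 * C^2 * \<beta> / \<kappa>\<rceil> + 1"
    have K1: "K \<ge> 1" by (simp add: K_def)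
    have "\<kappa> \<le> 4*C^2*\<beta>*(8*K/(K*K) + 8/K)" using main[OF K1, of "K*K"] K1 by simp
    also have "\<dots> = 64 * C^2 * \<beta> / K" using K1 by (simp add: field_simps)
    also have "\<dots> < \<kappa>"
    proof -
      have "64 * C^2 * \<beta> / \<kappa> < K" unfolding K_def by linarith
      then have "64 * C^2 * \<beta> < K * \<kappa>" using \<kappa>0 by (simp add: field_simps)
      then show ?thesis using K1 by (simp add: field_simps)
    qed
    finally show False by simp
  qed
  have all: "g n = g 0" for n
  proof (induction n rule: int_induct[where k = 0])
    case base then show ?case by simp
  next
    case (step1 i) then show ?case using key[of i] by simp
  next
    case (step2 i) then show ?case using key[of "i - 1"] by simp
  qed
  show ?thesis unfolding trivial_configuration_def
    by (rule exI[of _ "g 0"]) (use all in \<open>simp add: g_def\<close>)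
qed

end
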